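(* Consider a uniprocessor system of periodic tasks scheduled by a preemptive fixed-priority scheduler. Let $\tau_v$ be a task (the victim control task) and let $hp(\tau_v)$ be the set of tasks with priority higher than $\tau_v$. Each task $\tau_i \in hp(\tau_v)$ has period $T_i>0$ and worst-case execution time $C_i$ with $0 < C_i \le T_i$, and its jobs are released at times $j\cdot T_i$ for integers $j \ge 0$. Let the $k$-th job of $\tau_v$ be released at time $r'_{v,k} = r_{v,k} + \delta \ge 0$, where $r_{v,k}$ is its nominal release time and $\delta \ge 0$ its release delay. A job of $\tau_i\in hp(\tau_v)$ with index $j$ is called a carry-in job for this victim job if $j\cdot T_i < r'_{v,k}$ and $j\cdot T_i + C_i > r'_{v,k}$, and the carry-in interference $I(k)$ is the total amount $\sum_{\tau_i \in hp(\tau_v)} C_i \cdot \#\{\text{carry-in jobs of } \tau_i\}$. Then $$I(k) = \sum_{\tau_i \in hp(\tau_v)} \max\!\left(0,\ \left\lceil \frac{r'_{v,k}}{T_i}\right\rceil - \left\lfloor \frac{r'_{v,k} - C_i}{T_i}\right\rfloor - 1\right) C_i .$$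
   Context: Preemptive fixed-priority (PFP) scheduling on a single core: at each instant the highest-priority released, unfinished job executes. Each job of a task $\tau_i$ is charged at most its worst-case execution time $C_i$ of interference. $\lceil\cdot\rceil$ and $\lfloor\cdot\rfloor$ denote ceiling and floor. *)

theory Defs
  imports Complex_Main
begin

definition carry_in_jobs :: "real \<Rightarrow> real \<Rightarrow> real \<Rightarrow> nat set" where
  "carry_in_jobs Ti Ci r = {j::nat. real j * Ti < r \<and> real j * Ti + Ci > r}"

definition carry_in_interference ::
  "'t set \<Rightarrow> ('t \<Rightarrow> real) \<Rightarrow> ('t \<Rightarrow> real) \<Rightarrow> real \<Rightarrow> real" where
  "carry_in_interference hp T C r =
     (\<Sum>i\<in>hp. C i * real (card (carry_in_jobs (T i) (C i) r)))"

end

theory Submission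
  imports Defs
begin

lemma card_one:
  fixes Ti Ci r :: real
  assumes T: "Ti > 0" and C: "0 < Ci" "Ci \<le> Ti" and r: "r \<ge> 0"
  shows "real (card (carry_in_jobs Ti Ci r)) =
    real_of_int (max 0 (\<lceil>r / Ti\<rceil> - \<lfloor>(r - Ci) / Ti\<rfloor> - 1))"
proof -
  define a where "a = \<lfloor>(r - Ci) / Ti\<rfloor> + 1"
  define b where "b = \<lceil>r / Ti\<rceil>"
  have "(r - Ci) / Ti \<ge> -1" using T C r by (simp add: field_simps)
  hence a0: "a \<ge> 0" unfolding a_def by linarith
  have "r / Ti \<ge> 0" using T r by simp
  hence b0: "b \<ge> 0" unfolding b_def by linarith
  have eq: "carry_in_jobs Ti Ci r = {nat a ..< nat b}"
  proof (rule set_eqI)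
    fix j :: nat
    have e1: "real j * Ti < r \<longleftrightarrow> int j < b"
      unfolding b_def less_ceiling_iff using T by (simp add: field_simps)
    have e2: "r < real j * Ti + Ci \<longleftrightarrow> a \<le> int j"
    proof -
      have "r < real j * Ti + Ci \<longleftrightarrow> (r - Ci) / Ti < of_int (int j)"
        using T by (simp add: field_simps)
      also have "\<dots> \<longleftrightarrow> \<lfloor>(r - Ci) / Ti\<rfloor> < int j" by (simp only: floor_less_iff)
      finally show ?thesis unfolding a_def by linarith
    qed
    show "j \<in> carry_in_jobs Ti Ci r \<longleftrightarrow> j \<in> {nat a ..< nat b}"
      unfolding carry_in_jobs_def using e1 e2 a0 b0 by auto
  qed
  show ?thesis unfolding eq using a0 b0 by (simp add: a_def b_def)
qed

theorem lemma1:
  fixes hp :: "'t set" and T C :: "'t \<Rightarrow> real" and r_nom delta :: real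
  assumes "finite hp"
    and "\<And>i. i \<in> hp \<Longrightarrow> T i > 0"
    and "\<And>i. i \<in> hp \<Longrightarrow> 0 < C i \<and> C i \<le> T i"
    and "delta \<ge> 0"
    and "r_nom + delta \<ge> 0"
  shows "carry_in_interference hp T C (r_nom + delta) =
    (\<Sum>i\<in>hp. real_of_int (max 0 (\<lceil>(r_nom + delta) / T i\<rceil>
        - \<lfloor>((r_nom + delta) - C i) / T i\<rfloor> - 1)) * C i)"
  unfolding carry_in_interference_def
proof (rule sum.cong)
  fix i assume i: "i \<in> hp"
  show "C i * real (card (carry_in_jobs (T i) (C i) (r_nom + delta))) =
    real_of_int (max 0 (\<lceil>(r_nom + delta) / T i\<rceil>
        - \<lfloor>((r_nom + delta) - C i) / T i\<rfloor> - 1)) * C i"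
    using card_one[of "T i" "C i" "r_nom + delta"] assms(2,3,5) i by simp
qed simp

end
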